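(* Let $\mathcal{V}$ be a finite vocabulary, $N\ge 2$, and let $U=(t_1,\dots,t_N)$ be a random sequence with values in $\mathcal{V}^N$ and distribution $P$. Fix $t^*\in\mathcal{V}$ and write $\Pr[t_k=t^*]$ for the probability that the $k$-th token equals $t^*$. (1) (Autoregressive training.) With $\mu_c(t^*,U)=\sum_{k=1}^N(N-k)\mathbf{1}\{t_k=t^*\}$ and $\mu_p(t^*,U)=\sum_{k=1}^N(k-1)\mathbf{1}\{t_k=t^*\}$, $$\frac{\mathbb{E}_P[\mu_c(t^*,U)]}{\mathbb{E}_P[\mu_p(t^*,U)]}=\frac{\sum_{k=1}^N(N-k)\Pr[t_k=t^*]}{\sum_{k=1}^N(k-1)\Pr[t_k=t^*]}$$ (whenever the denominator is nonzero), so that this ratio depends on the positional probabilities $\Pr[t_k=t^*]$. (2) (Bidirectional training.) Let $m_1,\dots,m_N$ be i.i.d. Bernoulli random variables with $\Pr[m_k=1]=\rho$, independent of $U$, and set $$\mu_c(t^*,U,m)=\sum_{k=1}^N\mathbf{1}\{t_k=t^*\}\mathbf{1}\{m_k=0\}\sum_{k'\neq k}\mathbf{1}\{m_{k'}=1\},\qquad \mu_p(t^*,U,m)=\sum_{k=1}^N\mathbf{1}\{t_k=t^*\}\mathbf{1}\{m_k=1\}\sum_{k'\neq k}\mathbf{1}\{m_{k'}=0\}.$$ Then (whenever the expectations are nonzero) $$\frac{\mathbb{E}[\mu_c(t^*,U,m)]}{\mathbb{E}[\mu_p(t^*,U,m)]}=1.$$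
   Context: Interpretation: under autoregressive training a token at position $k$ is used as context for the $N-k$ later tokens and is predicted from the $k-1$ earlier tokens, so $\mu_c$ (resp. $\mu_p$) counts the number of tokens predicted by (resp. used to predict) occurrences of $t^*$. Under bidirectional (masked) training, $m_k=1$ means position $k$ is masked (predicted); a token contributes as context only if it is not masked, and a masked token is predicted from the unmasked ones. Expectations in (2) are over both $U$ and the masks. *)

theory Defs
  imports "HOL-Probability.Probability"
begin

(* A sequence U = (t_1,...,t_N) is a function nat => 'v, positions 1..N.
   A mask m = (m_1,...,m_N) is a function nat => bool; m k = True means m_k = 1 (masked). *)

definition ind :: "bool \<Rightarrow> real" where
  "ind b = (if b then 1 else 0)"

definition mu_c_ar :: "nat \<Rightarrow> 'v \<Rightarrow> (nat \<Rightarrow> 'v) \<Rightarrow> real" where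
  "mu_c_ar N t U = (\<Sum>k=1..N. real (N - k) * ind (U k = t))"

definition mu_p_ar :: "nat \<Rightarrow> 'v \<Rightarrow> (nat \<Rightarrow> 'v) \<Rightarrow> real" where
  "mu_p_ar N t U = (\<Sum>k=1..N. real (k - 1) * ind (U k = t))"

definition mu_c_bi :: "nat \<Rightarrow> 'v \<Rightarrow> (nat \<Rightarrow> 'v) \<Rightarrow> (nat \<Rightarrow> bool) \<Rightarrow> real" where
  "mu_c_bi N t U m = (\<Sum>k=1..N. ind (U k = t) * ind (\<not> m k) *
       (\<Sum>k'\<in>{1..N} - {k}. ind (m k')))"

definition mu_p_bi :: "nat \<Rightarrow> 'v \<Rightarrow> (nat \<Rightarrow> 'v) \<Rightarrow> (nat \<Rightarrow> bool) \<Rightarrow> real" where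
  "mu_p_bi N t U m = (\<Sum>k=1..N. ind (U k = t) * ind (m k) *
       (\<Sum>k'\<in>{1..N} - {k}. ind (\<not> m k')))"

definition mask_pmf :: "nat \<Rightarrow> real \<Rightarrow> (nat \<Rightarrow> bool) pmf" where
  "mask_pmf N \<rho> = Pi_pmf {1..N} False (\<lambda>_. bernoulli_pmf \<rho>)"

end

theory Submission
  imports Defs
begin

lemma int_bdd:
  fixes f :: "'a \<Rightarrow> real"
  assumes "\<And>x. \<bar>f x\<bar> \<le> B"
  shows "integrable (measure_pmf M) f"
  by (rule measure_pmf.integrable_const_bound[where B=B]) (auto simp: assms)

lemma ind_abs: "\<bar>ind b\<bar> \<le> 1" by (simp add: ind_def)

lemma E_ind: "measure_pmf.expectation M (\<lambda>x. ind (P x)) = measure_pmf.prob M {x. P x}"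
proof -
  have "(\<lambda>x. ind (P x)) = indicator {x. P x}" by (auto simp: ind_def fun_eq_iff)
  then show ?thesis by simp
qed

lemma E_pair:
  assumes "0 \<le> \<rho>" "\<rho> \<le> 1" "j \<in> {1..N}"
  shows "measure_pmf.expectation (pair_pmf P (mask_pmf N \<rho>)) (\<lambda>(U, m). ind (U k = t) * ind (m j))
     = measure_pmf.prob P {U. U k = t} * \<rho>"
proof -
  let ?M = "pair_pmf P (mask_pmf N \<rho>)"
  let ?g = "\<lambda>(U, m). (U k, m j)"
  have "(\<lambda>(U, m). ind (U k = t) * ind (m j)) = (\<lambda>x. ind (?g x = (t, True)))"
    by (auto simp: ind_def fun_eq_iff)
  then have "measure_pmf.expectation ?M (\<lambda>(U, m). ind (U k = t) * ind (m j))
      = measure_pmf.prob ?M {x. ?g x = (t, True)}" by (simp add: E_ind)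
  also have "\<dots> = measure_pmf.prob (map_pmf ?g ?M) {(t, True)}"
    by (simp add: vimage_def)
  also have "map_pmf ?g ?M = pair_pmf (map_pmf (\<lambda>U. U k) P) (map_pmf (\<lambda>m. m j) (mask_pmf N \<rho>))"
    by (rule map_pair)
  also have "map_pmf (\<lambda>m. m j) (mask_pmf N \<rho>) = bernoulli_pmf \<rho>"
    using assms by (simp add: mask_pmf_def Pi_pmf_component)
  also have "measure_pmf.prob (pair_pmf (map_pmf (\<lambda>U. U k) P) (bernoulli_pmf \<rho>)) {(t, True)}
     = pmf (map_pmf (\<lambda>U. U k) P) t * \<rho>"
    using assms by (simp add: measure_pmf_single pmf_pair)
  also have "pmf (map_pmf (\<lambda>U. U k) P) t = measure_pmf.prob P {U. U k = t}"
    by (simp add: pmf_map vimage_def)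
  finally show ?thesis .
qed


lemma ind_nonneg: "0 \<le> ind b" by (simp add: ind_def)
lemma ind_le1: "ind b \<le> 1" by (simp add: ind_def)

lemma bnd3: "\<bar>ind a * ind b * (\<Sum>k'\<in>{1..N} - {k}. ind (c k'))\<bar> \<le> real N"
proof -
  have s0: "0 \<le> (\<Sum>k'\<in>{1..N} - {k}. ind (c k'))" by (intro sum_nonneg ind_nonneg)
  have "(\<Sum>k'\<in>{1..N} - {k}. ind (c k')) \<le> (\<Sum>k'\<in>{1..N}. ind (c k'))"
    by (intro sum_mono2) (auto simp: ind_nonneg)
  also have "\<dots> \<le> (\<Sum>k'\<in>{1..N}. 1)" by (intro sum_mono ind_le1)
  finally have s1: "(\<Sum>k'\<in>{1..N} - {k}. ind (c k')) \<le> real N" by simp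
  have "\<bar>ind a * ind b * (\<Sum>k'\<in>{1..N} - {k}. ind (c k'))\<bar> = ind a * ind b * (\<Sum>k'\<in>{1..N} - {k}. ind (c k'))"
    using s0 by (simp add: ind_nonneg)
  also have "\<dots> \<le> 1 * 1 * real N"
    by (intro mult_mono s1 ind_le1 ind_nonneg mult_nonneg_nonneg s0 zero_le_one)
  finally show ?thesis by simp
qed

lemma diff_pt: "mu_c_bi N t U m - mu_p_bi N t U m =
   (\<Sum>k=1..N. \<Sum>k'\<in>{1..N} - {k}. (ind (U k = t) * ind (m k') - ind (U k = t) * ind (m k)))"
  unfolding mu_c_bi_def mu_p_bi_def sum_subtractf[symmetric]
proof (intro sum.cong refl)
  fix k
  show "ind (U k = t) * ind (\<not> m k) * (\<Sum>k'\<in>{1..N} - {k}. ind (m k')) -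
        ind (U k = t) * ind (m k) * (\<Sum>k'\<in>{1..N} - {k}. ind (\<not> m k')) =
        (\<Sum>k'\<in>{1..N} - {k}. ind (U k = t) * ind (m k') - ind (U k = t) * ind (m k))"
    unfolding sum_distrib_left sum_subtractf[symmetric]
    by (intro sum.cong refl) (simp add: ind_def)
qed

theorem proposition4:
  fixes P :: "(nat \<Rightarrow> 'v::finite) pmf" and N :: nat and tstar :: 'v and \<rho> :: real
  assumes "N \<ge> 2"
  shows "((\<Sum>k=1..N. real (k - 1) * measure_pmf.prob P {U. U k = tstar}) \<noteq> 0 \<longrightarrow>
           measure_pmf.expectation P (\<lambda>U. mu_c_ar N tstar U) /
           measure_pmf.expectation P (\<lambda>U. mu_p_ar N tstar U)
         = (\<Sum>k=1..N. real (N - k) * measure_pmf.prob P {U. U k = tstar}) /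
           (\<Sum>k=1..N. real (k - 1) * measure_pmf.prob P {U. U k = tstar}))
       \<and>
         ((0 \<le> \<rho> \<and> \<rho> \<le> 1 \<and>
           measure_pmf.expectation (pair_pmf P (mask_pmf N \<rho>)) (\<lambda>(U, m). mu_c_bi N tstar U m) \<noteq> 0 \<and>
           measure_pmf.expectation (pair_pmf P (mask_pmf N \<rho>)) (\<lambda>(U, m). mu_p_bi N tstar U m) \<noteq> 0)
          \<longrightarrow>
           measure_pmf.expectation (pair_pmf P (mask_pmf N \<rho>)) (\<lambda>(U, m). mu_c_bi N tstar U m) /
           measure_pmf.expectation (pair_pmf P (mask_pmf N \<rho>)) (\<lambda>(U, m). mu_p_bi N tstar U m) = 1)"
proof (intro conjI impI)
  have intk: "integrable (measure_pmf M) (\<lambda>U. c * ind (U k = tstar))" for M :: "(nat \<Rightarrow> 'v) pmf" and c k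
    by (rule int_bdd[where B="\<bar>c\<bar>"]) (auto simp: ind_def)
  have intk1: "integrable (measure_pmf M) (\<lambda>U. ind (U k = tstar))" for M :: "(nat \<Rightarrow> 'v) pmf" and k
    by (rule int_bdd[where B=1]) (auto simp: ind_def)
  have "measure_pmf.expectation P (\<lambda>U. mu_c_ar N tstar U)
      = (\<Sum>k=1..N. real (N - k) * measure_pmf.prob P {U. U k = tstar})"
    unfolding mu_c_ar_def by (subst Bochner_Integration.integral_sum) (auto simp: intk intk1 E_ind)
  moreover have "measure_pmf.expectation P (\<lambda>U. mu_p_ar N tstar U)
      = (\<Sum>k=1..N. real (k - 1) * measure_pmf.prob P {U. U k = tstar})"
    unfolding mu_p_ar_def by (subst Bochner_Integration.integral_sum) (auto simp: intk intk1 E_ind)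
  ultimately show "measure_pmf.expectation P (\<lambda>U. mu_c_ar N tstar U) /
           measure_pmf.expectation P (\<lambda>U. mu_p_ar N tstar U)
         = (\<Sum>k=1..N. real (N - k) * measure_pmf.prob P {U. U k = tstar}) /
           (\<Sum>k=1..N. real (k - 1) * measure_pmf.prob P {U. U k = tstar})" by simp
next
  let ?M = "pair_pmf P (mask_pmf N \<rho>)"
  assume H: "0 \<le> \<rho> \<and> \<rho> \<le> 1 \<and>
           measure_pmf.expectation ?M (\<lambda>(U, m). mu_c_bi N tstar U m) \<noteq> 0 \<and>
           measure_pmf.expectation ?M (\<lambda>(U, m). mu_p_bi N tstar U m) \<noteq> 0"
  have ic: "integrable (measure_pmf ?M) (\<lambda>(U, m). mu_c_bi N tstar U m)"
    unfolding mu_c_bi_def case_prod_beta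
    by (rule Bochner_Integration.integrable_sum, rule int_bdd[where B="real N"], rule bnd3)
  have ip: "integrable (measure_pmf ?M) (\<lambda>(U, m). mu_p_bi N tstar U m)"
    unfolding mu_p_bi_def case_prod_beta
    by (rule Bochner_Integration.integrable_sum, rule int_bdd[where B="real N"], rule bnd3)
  have i2: "integrable (measure_pmf ?M) (\<lambda>(U, m). ind (U k = tstar) * ind (m j))" for k j
    by (rule int_bdd[where B=1]) (auto simp: ind_def)
  have "measure_pmf.expectation ?M (\<lambda>(U, m). mu_c_bi N tstar U m) -
        measure_pmf.expectation ?M (\<lambda>(U, m). mu_p_bi N tstar U m)
      = measure_pmf.expectation ?M (\<lambda>x. (\<lambda>(U, m). mu_c_bi N tstar U m) x - (\<lambda>(U, m). mu_p_bi N tstar U m) x)"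
    using ic ip by (rule Bochner_Integration.integral_diff[symmetric])
  also have "(\<lambda>x. (\<lambda>(U, m). mu_c_bi N tstar U m) x - (\<lambda>(U, m). mu_p_bi N tstar U m) x)
     = (\<lambda>x. \<Sum>k=1..N. \<Sum>k'\<in>{1..N} - {k}. ((\<lambda>(U, m). ind (U k = tstar) * ind (m k')) x - (\<lambda>(U, m). ind (U k = tstar) * ind (m k)) x))"
    by (auto simp: diff_pt fun_eq_iff)
  also have "measure_pmf.expectation ?M \<dots> = (\<Sum>k=1..N. \<Sum>k'\<in>{1..N} - {k}.
      (measure_pmf.expectation ?M (\<lambda>(U, m). ind (U k = tstar) * ind (m k')) -
       measure_pmf.expectation ?M (\<lambda>(U, m). ind (U k = tstar) * ind (m k))))"
    apply (subst Bochner_Integration.integral_sum)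
     apply (rule Bochner_Integration.integrable_sum, rule Bochner_Integration.integrable_diff, rule i2, rule i2)
    apply (rule sum.cong[OF refl])
    apply (subst Bochner_Integration.integral_sum)
     apply (rule Bochner_Integration.integrable_diff, rule i2, rule i2)
    apply (rule sum.cong[OF refl])
    apply (rule Bochner_Integration.integral_diff, rule i2, rule i2)
    done
  also have "\<dots> = 0"
    using H by (intro sum.neutral ballI) (auto simp: E_pair)
  finally show "measure_pmf.expectation ?M (\<lambda>(U, m). mu_c_bi N tstar U m) /
           measure_pmf.expectation ?M (\<lambda>(U, m). mu_p_bi N tstar U m) = 1"
    using H by simp
qed

end
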